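(* Let $K$ be a $d_1$-standard knot. Then the HOMFLY-PT $S$-invariant $S(K)$, and the rank of $d_1$ in each trigrading, are completely determined by the trigraded vector space $\mathcal{H}(K)$ (i.e. by the dimensions $\dim\mathcal{H}^{q,a,t}(K)$).
   Context: For a knot $K$, $\mathcal{H}(K)$ is reduced triply graded (HOMFLY-PT) Khovanov–Rozansky homology over $\mathbb{Q}$, a finite-dimensional space graded by even gradings $(q,a,t)$; $\Delta=q+a+t$. By Rasmussen, there is a spectral sequence with first page $\mathcal{H}(K)$ whose $i$-th differential $d_1^{(i)}$ changes degrees by $(q,a,t)\mapsto(q+2i,a-2i,t+2-2i)$, converging to a one-dimensional space supported in tridegree $(q,a,t)=(S,-S,-S)$ (hence in $\Delta$-grading $-S$); this integer $S=S(K)$ is the HOMFLY-PT $S$-invariant. Write $d_1=d_1^{(1)}$. $K$ is $d_1$-standard if $d_1^{(i)}=0$ for all $i\ge 2$. *)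

theory Defs
  imports "Jordan_Normal_Form.DL_Rank"
begin

text \<open>Abstract model of Rasmussen's spectral sequence on reduced HOMFLY-PT homology.  A trigraded finite-dimensional
  rational vector space is represented (up to isomorphism) by its dimension function;
  a graded component of dimension n is the space of rational column vectors of length n,
  and linear maps between components are rational matrices.\<close>

type_synonym tdeg = "int \<times> int \<times> int"

definition mrank :: "rat mat \<Rightarrow> nat" where
  "mrank (A :: rat mat) = vec_space.rank (dim_row A) A"

fun shift :: "nat \<Rightarrow> tdeg \<Rightarrow> tdeg" where
  "shift i (q, a, t) = (q + 2 * int i, a - 2 * int i, t + 2 - 2 * int i)"

fun unshift :: "nat \<Rightarrow> tdeg \<Rightarrow> tdeg" where
  "unshift i (q, a, t) = (q - 2 * int i, a + 2 * int i, t - 2 + 2 * int i)"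

text \<open>E i g : dimension of the page E_i in tridegree g (pages indexed from 1; E_1 = H(K)).
  D i g : the differential d^(i) on page E_i leaving tridegree g, a matrix
  from E_i^g to E_i^(shift i g).\<close>
definition rasmussen_ss :: "(nat \<Rightarrow> tdeg \<Rightarrow> nat) \<Rightarrow> (nat \<Rightarrow> tdeg \<Rightarrow> rat mat) \<Rightarrow> int \<Rightarrow> bool" where
  "rasmussen_ss E D S \<longleftrightarrow>
     finite {g. E 1 g \<noteq> 0} \<and>
     (\<forall>q a t. E 1 (q, a, t) \<noteq> 0 \<longrightarrow> even q \<and> even a \<and> even t) \<and>
     (\<forall>i\<ge>1. \<forall>g. D i g \<in> carrier_mat (E i (shift i g)) (E i g)) \<and>
     (\<forall>i\<ge>1. \<forall>g. D i (shift i g) * D i g = 0\<^sub>m (E i (shift i (shift i g))) (E i g)) \<and>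
     (\<forall>i\<ge>1. \<forall>g. E (Suc i) g + mrank (D i g) + mrank (D i (unshift i g)) = E i g) \<and>
     (\<exists>N\<ge>1. \<forall>r\<ge>N. \<forall>g. E r g = (if g = (S, -S, -S) then 1 else 0))"

definition d1_standard :: "(nat \<Rightarrow> tdeg \<Rightarrow> rat mat) \<Rightarrow> bool" where
  "d1_standard D \<longleftrightarrow> (\<forall>i\<ge>2. \<forall>g. D i g = 0\<^sub>m (dim_row (D i g)) (dim_col (D i g)))"

end

theory Submission
  imports Defs
begin

lemma mrank_zero: "mrank (0\<^sub>m n m) = 0"
  unfolding mrank_def index_zero_mat(2) by (rule vec_space.rank_0I)

lemma mrank_le:
  assumes "A \<in> carrier_mat n m" shows "mrank A \<le> m"
proof -
  have "dim_row A = n" "dim_col A = m" using assms by auto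
  then have "A \<in> carrier_mat (dim_row A) m" using assms by simp
  then show ?thesis unfolding mrank_def by (rule vec_space.rank_le_nc)
qed

lemma chainA:
  fixes y :: "int \<Rightarrow> int"
  assumes bnd: "\<And>k. \<bar>k\<bar> > B \<Longrightarrow> y k = 0"
    and rec: "\<And>k. k < k0 \<Longrightarrow> y k + y (k - 1) = 0"
    and kk: "k < k0"
  shows "y k = 0"
proof (cases "k < - B - 1")
    case True then show ?thesis using bnd by simp
  next
    case False
    then have "k \<ge> - B - 1" by simp
    have "k < k0 \<longrightarrow> y k = 0" using \<open>k \<ge> - B - 1\<close>
    proof (induction k rule: int_ge_induct)
      case base then show ?case using bnd by simp
    next
      case (step i)
      show ?case using step rec[of "i+1"] by auto
    qed
    then show ?thesis using kk by simp
qed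

lemma chainB:
  fixes y :: "int \<Rightarrow> int"
  assumes bnd: "\<And>k. \<bar>k\<bar> > B \<Longrightarrow> y k = 0"
    and rec: "\<And>k. k > k0 \<Longrightarrow> y k + y (k - 1) = 0"
    and kk: "k \<ge> k0"
  shows "y k = 0"
proof -
  define z where "z = (\<lambda>k. y (- k - 1))"
  have "z (- k - 1) = 0"
  proof (rule chainA[where y=z and k="-k-1" and B="B+1" and k0="-k0"])
    fix j :: int assume "\<bar>j\<bar> > B + 1"
    then have "\<bar>- j - 1\<bar> > B" by linarith
    then show "z j = 0" unfolding z_def by (rule bnd)
  next
    fix j :: int assume "j < - k0"
    then have "y (- j) + y (- j - 1) = 0" using rec[of "- j"] by linarith
    moreover have "- (j - 1) - 1 = - j" by simp
    ultimately show "z j + z (j - 1) = 0" unfolding z_def by (metis add.commute)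
  next
    show "- k - 1 < - k0" using kk by simp
  qed
  then show ?thesis unfolding z_def by simp
qed

lemma E2_delta:
  assumes "rasmussen_ss E D S" and "d1_standard D"
  shows "E 2 g = (if g = (S, -S, -S) then 1 else 0)"
proof -
  have rk: "mrank (D i h) = 0" if "i \<ge> 2" for i h
  proof -
    have e: "D i h = 0\<^sub>m (dim_row (D i h)) (dim_col (D i h))"
      using assms(2) that unfolding d1_standard_def by blast
    have "mrank (D i h) = mrank (0\<^sub>m (dim_row (D i h)) (dim_col (D i h)))"
      using e by (rule arg_cong)
    also have "\<dots> = 0" by (rule mrank_zero)
    finally show ?thesis .
  qed
  have eq: "E (Suc i) g = E i g" if "i \<ge> 2" for i
  proof -
    have h: "\<forall>i\<ge>1. \<forall>g. E (Suc i) g + mrank (D i g) + mrank (D i (unshift i g)) = E i g"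
      using assms(1) unfolding rasmussen_ss_def by blast
    have "i \<ge> 1" using that by simp
    then have "E (Suc i) g + mrank (D i g) + mrank (D i (unshift i g)) = E i g" using h by blast
    then show ?thesis using rk[OF that] by simp
  qed
  have st: "E i g = E 2 g" if "i \<ge> 2" for i
    using that
  proof (induction i rule: dec_induct)
    case base then show ?case by simp
  next
    case (step n) then show ?case using eq[of n] by simp
  qed
  obtain N where N: "N \<ge> 1" "\<forall>r\<ge>N. \<forall>g. E r g = (if g = (S, -S, -S) then 1 else 0)"
    using assms(1) unfolding rasmussen_ss_def by blast
  have "E (max N 2) g = E 2 g" by (rule st) simp
  moreover have "E (max N 2) g = (if g = (S, -S, -S) then 1 else 0)"
    using N(2)[rule_format, of "max N 2" g] by simp
  ultimately show ?thesis by simp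
qed

lemma rank_eq:
  assumes "rasmussen_ss E D S" and "d1_standard D"
  shows "int (E 2 g) + int (mrank (D 1 g)) + int (mrank (D 1 (unshift 1 g))) = int (E 1 g)"
proof -
  have h: "\<forall>i\<ge>1. \<forall>g. E (Suc i) g + mrank (D i g) + mrank (D i (unshift i g)) = E i g"
    using assms(1) unfolding rasmussen_ss_def by blast
  then have "E (Suc 1) g + mrank (D 1 g) + mrank (D 1 (unshift 1 g)) = E 1 g" by blast
  then have "E 2 g + mrank (D 1 g) + mrank (D 1 (unshift 1 g)) = E 1 g" by (simp add: numeral_2_eq_2)
  then show ?thesis by (metis of_nat_add)
qed

lemma rank_zero:
  assumes "rasmussen_ss E D S" and "E 1 g = 0"
  shows "mrank (D 1 g) = 0"
proof -
  have "D 1 g \<in> carrier_mat (E 1 (shift 1 g)) (E 1 g)"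
    using assms(1) unfolding rasmussen_ss_def by blast
  then have "mrank (D 1 g) \<le> E 1 g" by (rule mrank_le)
  then show ?thesis using assms(2) by simp
qed

theorem lemma2p17:
  fixes E E' :: "nat \<Rightarrow> tdeg \<Rightarrow> nat"
    and D D' :: "nat \<Rightarrow> tdeg \<Rightarrow> rat mat"
    and S S' :: int
  assumes "rasmussen_ss E D S" and "d1_standard D"
    and "rasmussen_ss E' D' S'" and "d1_standard D'"
    and "E 1 = E' 1"
  shows "S = S' \<and> (\<forall>g. mrank (D 1 g) = mrank (D' 1 g))"
proof -
  define x where "x = (\<lambda>g. int (mrank (D 1 g)) - int (mrank (D' 1 g)))"
  have xrec: "x g + x (unshift 1 g) = (if g = (S', -S', -S') then 1 else 0) - (if g = (S, -S, -S) then 1 else 0)" for g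
    using rank_eq[OF assms(1,2), of g] rank_eq[OF assms(3,4), of g] assms(5)
      E2_delta[OF assms(1,2), of g] E2_delta[OF assms(3,4), of g]
    unfolding x_def by (simp split: if_splits)
  define A where "A = {g. E 1 g \<noteq> 0}"
  have finA: "finite A" using assms(1) unfolding rasmussen_ss_def A_def by blast
  define B where "B = (\<Sum>g\<in>A. \<bar>fst g\<bar>)"
  have Bb: "\<bar>fst g\<bar> \<le> B" if "g \<in> A" for g
    unfolding B_def using finA that by (intro member_le_sum) auto
  have x0: "x g = 0" if "\<bar>fst g\<bar> > B" for g
  proof -
    have "E 1 g = 0" using Bb[of g] that unfolding A_def by force
    then show ?thesis unfolding x_def using rank_zero[OF assms(1)] rank_zero[OF assms(3)] assms(5)
      by simp
  qed
  have ybnd: "x (q + 2*k, a - 2*k, t) = 0" if "\<bar>k\<bar> > B + \<bar>q\<bar>" for q a t k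
    using x0[of "(q + 2*k, a - 2*k, t)"] that by simp
  have yrec: "x (q + 2*k, a - 2*k, t) + x (q + 2*(k-1), a - 2*(k-1), t)
      = (if (q + 2*k, a - 2*k, t) = (S', -S', -S') then 1 else 0) - (if (q + 2*k, a - 2*k, t) = (S, -S, -S) then 1 else 0)"
    for q a t k
    using xrec[of "(q + 2*k, a - 2*k, t)"] by (simp add: algebra_simps)
  have SS: "S = S'"
  proof (rule ccontr)
    assume ne: "S \<noteq> S'"
    define y where "y = (\<lambda>k. x (S + 2*k, -S - 2*k, -S))"
    have yb: "\<And>k. \<bar>k\<bar> > B + \<bar>S\<bar> \<Longrightarrow> y k = 0" unfolding y_def using ybnd by simp
    have yr: "y k + y (k - 1) = (if k = 0 then -1 else 0)" for k
      using yrec[of S k "-S" "-S"] ne unfolding y_def by (auto simp: algebra_simps)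
    have "y (-1) = 0"
    proof (rule chainA[where y=y and k="-1" and B="B+\<bar>S\<bar>" and k0=0])
      show "\<And>k. B+\<bar>S\<bar> < \<bar>k\<bar> \<Longrightarrow> y k = 0" by (rule yb)
      show "\<And>k. k < 0 \<Longrightarrow> y k + y (k-1) = 0" using yr by simp
    qed simp
    moreover have "y 0 = 0"
    proof (rule chainB[where y=y and k=0 and B="B+\<bar>S\<bar>" and k0=0])
      show "\<And>k. B+\<bar>S\<bar> < \<bar>k\<bar> \<Longrightarrow> y k = 0" by (rule yb)
      show "\<And>k. k > 0 \<Longrightarrow> y k + y (k-1) = 0" using yr by simp
    qed simp
    ultimately show False using yr[of 0] by simp
  qed
  have "x g = 0" for g
  proof -
    obtain q a t where g: "g = (q, a, t)" by (cases g) auto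
    define y where "y = (\<lambda>k. x (q + 2*k, a - 2*k, t))"
    have yb: "\<And>k. \<bar>k\<bar> > B + \<bar>q\<bar> \<Longrightarrow> y k = 0" unfolding y_def using ybnd by simp
    have yr: "y k + y (k - 1) = 0" for k
      using yrec[of q k a t] SS unfolding y_def by simp
    have "y 0 = 0"
    proof (rule chainA[where y=y and k=0 and B="B+\<bar>q\<bar>" and k0=1])
      show "\<And>k. B+\<bar>q\<bar> < \<bar>k\<bar> \<Longrightarrow> y k = 0" by (rule yb)
      show "\<And>k. k < 1 \<Longrightarrow> y k + y (k-1) = 0" using yr by simp
    qed simp
    then show ?thesis unfolding y_def g by simp
  qed
  then show ?thesis using SS unfolding x_def by simp
qed

end
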